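(* Let $\mathcal{X}$ be a finite set and $X=(X_1,\dots,X_n)$ a random vector in $\mathcal{X}^n$ satisfying a $\mathfrak{d}$-LSI$(\sigma^2)$. Let $\mathcal{F}$ be a family of functions $f:\mathcal{X}\to\mathbb{R}$ and for each $f$ let $c(f)\ge0$ satisfy $|f(x)-f(y)|\le c(f)$ for all $x,y\in\mathcal{X}$, with $\sup_{f\in\mathcal{F}}c(f)<\infty$. Let $g=g(X)=\sup_{f\in\mathcal{F}}\big|\sum_{j=1}^nf(X_j)\big|$. Then for every $t\ge0$, \[ \mathbb{P}(g\ge\mathbb{E}g+t)\le2\exp\Big(-\frac{t^2}{15\sigma^2n\sup_{f\in\mathcal{F}}c(f)^2}\Big). \]
   Context: $\mathfrak{d}$-LSI$(\sigma^2)$: with $\mu$ the law of $X$ and $\mu(\cdot\mid x_{i^c})$ the conditional law of $X_i$ given $X_j=x_j$ ($j\neq i$), set $\mathfrak{d}_iF(x)^2=\mathrm{Var}_{\mu(\cdot\mid x_{i^c})}(F(x_{i^c},\cdot))$ and $|\mathfrak{d}F|^2=\sum_i\mathfrak{d}_iF^2$; $\mu$ satisfies it if $\mathrm{Ent}_\mu(F^2)\le2\sigma^2\int|\mathfrak{d}F|^2d\mu$ for all $F:\mathcal{X}^n\to\mathbb{R}$, where $\mathrm{Ent}_\mu(h)=\int h\log h\,d\mu-\int h\,d\mu\log\int h\,d\mu$. *)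

theory Defs
  imports "HOL-Probability.Probability"
begin

text \<open>Points of the product space are functions from a finite index type 'n
  (so n = CARD('n)) into a finite alphabet type 'a. The law of the random vector X
  is a pmf mu on these points.\<close>

definition xlogx :: "real \<Rightarrow> real" where
  "xlogx u = (if u = 0 then 0 else u * ln u)"

definition Ent :: "'b pmf \<Rightarrow> ('b \<Rightarrow> real) \<Rightarrow> real" where
  "Ent \<mu> h = measure_pmf.expectation \<mu> (\<lambda>x. xlogx (h x))
              - xlogx (measure_pmf.expectation \<mu> h)"

definition others_eq :: "'n \<Rightarrow> ('n \<Rightarrow> 'a) \<Rightarrow> ('n \<Rightarrow> 'a) set" where
  "others_eq i x = {y. \<forall>j. j \<noteq> i \<longrightarrow> y j = x j}"

text \<open>(d_i F)(x)^2: the variance of F(x_{i^c}, .) under the conditional law of X_i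
  given X_j = x_j (j \<noteq> i). Realised as the variance of F under mu conditioned on
  the event others_eq i x (well defined when this event has positive mass; set to 0
  otherwise, which only concerns a mu-null set of x).\<close>
definition dsq :: "('n \<Rightarrow> 'a) pmf \<Rightarrow> (('n \<Rightarrow> 'a) \<Rightarrow> real) \<Rightarrow> 'n \<Rightarrow> ('n \<Rightarrow> 'a) \<Rightarrow> real" where
  "dsq \<mu> F i x =
     (if set_pmf \<mu> \<inter> others_eq i x = {} then 0
      else measure_pmf.variance (cond_pmf \<mu> (others_eq i x)) F)"

definition dgrad_sq :: "('n::finite \<Rightarrow> 'a) pmf \<Rightarrow> (('n \<Rightarrow> 'a) \<Rightarrow> real) \<Rightarrow> ('n \<Rightarrow> 'a) \<Rightarrow> real" where
  "dgrad_sq \<mu> F x = (\<Sum>i\<in>UNIV. dsq \<mu> F i x)"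

definition d_LSI :: "('n::finite \<Rightarrow> 'a) pmf \<Rightarrow> real \<Rightarrow> bool" where
  "d_LSI \<mu> \<sigma>2 \<longleftrightarrow>
     (\<forall>F :: ('n \<Rightarrow> 'a) \<Rightarrow> real.
        Ent \<mu> (\<lambda>x. (F x)\<^sup>2) \<le> 2 * \<sigma>2 * measure_pmf.expectation \<mu> (dgrad_sq \<mu> F))"

end

theory Submission imports Defs begin
lemma herbst:
  fixes Z Z' :: "real \<Rightarrow> real" and m K l :: real
  assumes Zpos: "\<And>l. Z l > 0" and Z0: "Z 0 = 1"
    and der: "\<And>l. (Z has_real_derivative Z' l) (at l)"
    and Z'0: "Z' 0 = m"
    and ineq: "\<And>l. l > 0 \<Longrightarrow> l * Z' l - Z l * ln (Z l) \<le> K * l\<^sup>2 * Z l"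
    and l: "l > 0"
  shows "ln (Z l) \<le> l * m + K * l\<^sup>2"
proof -
  define E where "E l = ln (Z l) - l * m - K * l\<^sup>2" for l
  have dE: "(E has_real_derivative (Z' l / Z l - m - 2 * K * l)) (at l)" for l
    unfolding E_def
    by (rule derivative_eq_intros der refl | use Zpos in auto)+
  have E0: "E 0 = 0" using Z0 by (simp add: E_def)
  have lim: "((\<lambda>y. E y / y) \<longlongrightarrow> 0) (at 0)"
    using dE[of 0] Z0 Z'0 unfolding has_field_derivative_iff by (simp add: E0)
  define D where "D y = E y / y" for y
  have mono: "D l \<le> D s" if "0 < s" "s \<le> l" for s
  proof (rule DERIV_nonpos_imp_nonincreasing[OF that(2)])
    fix x assume x: "s \<le> x" "x \<le> l"
    hence xp: "x > 0" using that by simp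
    have d: "(D has_real_derivative ((Z' x / Z x - m - 2 * K * x) * x - E x) / x\<^sup>2) (at x)"
      unfolding D_def using xp
      by (auto intro!: derivative_eq_intros dE simp: power2_eq_square)
    have "x * Z' x - Z x * ln (Z x) \<le> K * x\<^sup>2 * Z x" using ineq xp by simp
    hence "x * (Z' x / Z x) - ln (Z x) \<le> K * x\<^sup>2"
      using Zpos[of x] by (simp add: field_simps)
    hence "(Z' x / Z x - m - 2 * K * x) * x - E x \<le> 0"
      by (simp add: E_def algebra_simps power2_eq_square)
    hence "((Z' x / Z x - m - 2 * K * x) * x - E x) / x\<^sup>2 \<le> 0"
      by (intro divide_nonpos_nonneg) auto
    with d show "\<exists>y. DERIV D x :> y \<and> y \<le> 0" by blast
  qed
  have "D l \<le> 0"
  proof (rule tendsto_lowerbound)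
    show "(D \<longlongrightarrow> 0) (at_right 0)"
      using lim unfolding D_def by (rule tendsto_mono[OF at_le, rotated]) simp
    show "\<forall>\<^sub>F s in at_right 0. D l \<le> D s"
      unfolding eventually_at_right_field using l mono by (intro exI[of _ l]) auto
  qed simp
  thus ?thesis using l by (simp add: D_def E_def divide_nonpos_pos field_simps)
qed
lemma exp_half_ineq:
  fixes a u :: real assumes "0 \<le> u"
  shows "(exp (a/2) - exp ((a-u)/2))\<^sup>2 \<le> (u/2)\<^sup>2 * exp a"
proof -
  have e: "exp ((a-u)/2) = exp (a/2) * exp (-(u/2))" by (simp flip: exp_add add: field_simps)
  have "1 - u/2 \<le> exp (-(u/2))" using exp_ge_add_one_self[of "-(u/2)"] by simp
  moreover have "exp (-(u/2)) \<le> 1" using assms by simp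
  ultimately have "0 \<le> 1 - exp (-(u/2))" "1 - exp (-(u/2)) \<le> u/2" by auto
  hence "(1 - exp (-(u/2)))\<^sup>2 \<le> (u/2)\<^sup>2" by (intro power_mono) auto
  hence "exp (a/2)^2 * (1 - exp (-(u/2)))\<^sup>2 \<le> exp (a/2)^2 * (u/2)\<^sup>2"
    by (intro mult_left_mono) auto
  moreover have "exp (a/2)^2 = exp a" by (simp flip: exp_add add: power2_eq_square)
  moreover have "(exp (a/2) - exp ((a-u)/2))\<^sup>2 = exp (a/2)^2 * (1 - exp (-(u/2)))\<^sup>2"
    unfolding e by (simp add: power2_eq_square algebra_simps)
  ultimately show ?thesis by (simp add: mult.commute)
qed

lemma var_le:
  fixes \<nu> :: "'b::finite pmf" and F :: "'b \<Rightarrow> real"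
  shows "measure_pmf.variance \<nu> F \<le> measure_pmf.expectation \<nu> (\<lambda>y. (F y - k)\<^sup>2)"
proof -
  define q where "q = pmf \<nu>"
  define m where "m = (\<Sum>y\<in>UNIV. F y * q y)"
  have q1: "(\<Sum>y\<in>UNIV. q y) = 1" unfolding q_def by (rule sum_pmf_eq_1) auto
  have Em: "measure_pmf.expectation \<nu> F = m" unfolding m_def q_def
    by (rule integral_measure_pmf_real) auto
  have V: "measure_pmf.variance \<nu> F = (\<Sum>y\<in>UNIV. (F y - m)\<^sup>2 * q y)" unfolding Em q_def
    by (rule integral_measure_pmf_real) auto
  have W: "measure_pmf.expectation \<nu> (\<lambda>y. (F y - k)\<^sup>2) = (\<Sum>y\<in>UNIV. (F y - k)\<^sup>2 * q y)"
    unfolding q_def by (rule integral_measure_pmf_real) auto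
  have "(\<Sum>y\<in>UNIV. (F y - k)\<^sup>2 * q y) = (\<Sum>y\<in>UNIV. (F y - m)\<^sup>2 * q y + 2 * (m - k) * (F y * q y) - 2*(m-k)*m * q y + (m-k)\<^sup>2 * q y)"
    by (intro sum.cong) (auto simp: power2_eq_square algebra_simps)
  also have "\<dots> = (\<Sum>y\<in>UNIV. (F y - m)\<^sup>2 * q y) + 2 * (m - k) * m - 2*(m-k)*m * 1 + (m-k)\<^sup>2 * 1"
    by (simp add: sum.distrib sum_subtractf flip: sum_distrib_left q1 m_def)
  finally show ?thesis using V W by simp
qed

lemma tower:
  fixes \<mu> :: "'b::finite pmf" and A :: "'b \<Rightarrow> 'b set" and e :: "'b \<Rightarrow> real"
  assumes rfl: "\<And>x. x \<in> A x" and eq: "\<And>x y. y \<in> A x \<Longrightarrow> A y = A x"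
  shows "(\<Sum>x\<in>UNIV. pmf \<mu> x * (\<Sum>y\<in>UNIV. pmf (cond_pmf \<mu> (A x)) y * e y))
       = (\<Sum>x\<in>UNIV. pmf \<mu> x * e x)"
proof -
  define p where "p = pmf \<mu>"
  define S where "S x = measure_pmf.prob \<mu> (A x)" for x
  have S: "S x = (\<Sum>z\<in>A x. p z)" for x unfolding S_def p_def
    by (rule measure_measure_pmf_finite) simp
  have sym: "y \<in> A x \<longleftrightarrow> x \<in> A y" for x y using rfl eq by metis
  define T where "T x y = (if y \<in> A x then p x * p y * e y / S x else 0)" for x y
  have "pmf \<mu> x * (\<Sum>y\<in>UNIV. pmf (cond_pmf \<mu> (A x)) y * e y) = (\<Sum>y\<in>UNIV. T x y)" for x
  proof (cases "p x = 0")
    case True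
    hence "T x y = 0" for y by (simp add: T_def)
    thus ?thesis using True by (simp add: p_def)
  next
    case False
    hence ne: "set_pmf \<mu> \<inter> A x \<noteq> {}" using rfl[of x] by (auto simp: p_def set_pmf_eq)
    show ?thesis unfolding sum_distrib_left
      by (intro sum.cong) (auto simp: pmf_cond[OF ne] T_def p_def S_def)
  qed
  hence "(\<Sum>x\<in>UNIV. pmf \<mu> x * (\<Sum>y\<in>UNIV. pmf (cond_pmf \<mu> (A x)) y * e y))
      = (\<Sum>y\<in>UNIV. \<Sum>x\<in>UNIV. T x y)" by (simp add: sum.swap[of T])
  also have "\<dots> = (\<Sum>y\<in>UNIV. p y * e y)"
  proof (rule sum.cong[OF HOL.refl])
    fix y
    have SS: "x \<in> A y \<Longrightarrow> S x = S y" for x using eq[of x y] by (simp add: S_def)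
    have "(\<Sum>x\<in>UNIV. T x y) = (\<Sum>x\<in>UNIV. if x \<in> A y then p x * (p y * e y / S y) else 0)"
      by (intro sum.cong) (auto simp: T_def sym SS)
    also have "\<dots> = (\<Sum>x\<in>A y. p x) * (p y * e y / S y)"
      by (simp add: sum.If_cases sum_distrib_right Int_absorb1 sum_divide_distrib)
    also have "\<dots> = p y * e y"
    proof (cases "S y = 0")
      case True
      have "p y \<le> S y" unfolding S using rfl[of y]
        by (intro member_le_sum) (auto simp: p_def)
      moreover have "p y \<ge> 0" by (simp add: p_def)
      ultimately show ?thesis using True by (simp add: S)
    qed (simp add: S)
    finally show "(\<Sum>x\<in>UNIV. T x y) = p y * e y" .
  qed
  finally show ?thesis by (simp add: p_def)
qed


lemma others_eq_refl: "x \<in> others_eq i x" by (simp add: others_eq_def)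
lemma others_eq_eq: "y \<in> others_eq i x \<Longrightarrow> others_eq i y = others_eq i x"
  by (auto simp: others_eq_def)

lemma dsq_bound:
  fixes \<mu> :: "('n::finite \<Rightarrow> 'a::finite) pmf" and g :: "('n \<Rightarrow> 'a) \<Rightarrow> real"
  assumes x: "x \<in> set_pmf \<mu>" and l: "l \<ge> 0"
    and osc: "\<And>y. y \<in> others_eq i x \<Longrightarrow> \<bar>g y - g x\<bar> \<le> C"
  shows "dsq \<mu> (\<lambda>y. exp (l * g y / 2)) i x
     \<le> (l*C)\<^sup>2 * (\<Sum>y\<in>UNIV. pmf (cond_pmf \<mu> (others_eq i x)) y * exp (l * g y))"
proof -
  define A where "A = others_eq i x"
  have ne: "set_pmf \<mu> \<inter> A \<noteq> {}" using x others_eq_refl[of x i] by (auto simp: A_def)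
  define \<nu> where "\<nu> = cond_pmf \<mu> A"
  define k where "k = exp ((l * g x - l * C) / 2)"
  have "dsq \<mu> (\<lambda>y. exp (l * g y / 2)) i x = measure_pmf.variance \<nu> (\<lambda>y. exp (l * g y / 2))"
    using ne by (simp add: dsq_def A_def \<nu>_def)
  also have "\<dots> \<le> measure_pmf.expectation \<nu> (\<lambda>y. (exp (l * g y / 2) - k)\<^sup>2)"
    by (rule var_le)
  also have "\<dots> = (\<Sum>y\<in>UNIV. (exp (l * g y / 2) - k)\<^sup>2 * pmf \<nu> y)"
    by (rule integral_measure_pmf_real) auto
  also have "\<dots> \<le> (\<Sum>y\<in>UNIV. (l*C)\<^sup>2 * (pmf \<nu> y * exp (l * g y)))"
  proof (rule sum_mono)
    fix y
    show "(exp (l * g y / 2) - k)\<^sup>2 * pmf \<nu> y \<le> (l*C)\<^sup>2 * (pmf \<nu> y * exp (l * g y))"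
    proof (cases "y \<in> A")
      case False thus ?thesis by (simp add: \<nu>_def pmf_cond[OF ne])
    next
      case True
      hence o: "\<bar>g y - g x\<bar> \<le> C" using osc by (simp add: A_def)
      define u where "u = l * (g y - g x + C)"
      have u0: "0 \<le> u" using o l by (simp add: u_def)
      have "g y - g x + C \<le> 2 * C" using o by (simp add: abs_le_iff)
      hence "l * (g y - g x + C) \<le> l * (2 * C)" using l by (rule mult_left_mono)
      hence u2: "u / 2 \<le> l * C" unfolding u_def by simp
      have e: "(exp (l * g y / 2) - k)\<^sup>2 \<le> (u/2)\<^sup>2 * exp (l * g y)"
        using exp_half_ineq[OF u0, of "l * g y"] by (simp add: k_def u_def algebra_simps)
      also have "\<dots> \<le> (l*C)\<^sup>2 * exp (l * g y)"
        using u0 u2 by (intro mult_right_mono power_mono) auto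
      finally have "(exp (l * g y / 2) - k)\<^sup>2 * pmf \<nu> y \<le> (l*C)\<^sup>2 * exp (l * g y) * pmf \<nu> y"
        by (rule mult_right_mono) simp
      thus ?thesis by (simp add: mult_ac)
    qed
  qed
  also have "\<dots> = (l*C)\<^sup>2 * (\<Sum>y\<in>UNIV. pmf (cond_pmf \<mu> (others_eq i x)) y * exp (l * g y))"
    by (simp add: sum_distrib_left \<nu>_def A_def)
  finally show ?thesis .
qed

lemma sum_diff_one:
  fixes f :: "'a \<Rightarrow> real" and x y :: "'n::finite \<Rightarrow> 'a"
  assumes "y \<in> others_eq i x"
  shows "(\<Sum>j\<in>UNIV. f (y j)) - (\<Sum>j\<in>UNIV. f (x j)) = f (y i) - f (x i)"
proof -
  have "(\<Sum>j\<in>UNIV. f (y j)) - (\<Sum>j\<in>UNIV. f (x j)) = (\<Sum>j\<in>UNIV. f (y j) - f (x j))"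
    by (simp add: sum_subtractf)
  also have "\<dots> = (\<Sum>j\<in>UNIV. if j = i then f (y i) - f (x i) else 0)"
    using assms by (intro sum.cong) (auto simp: others_eq_def)
  also have "\<dots> = f (y i) - f (x i)" by simp
  finally show ?thesis .
qed

theorem proposition1p4:
  fixes \<mu> :: "('n::finite \<Rightarrow> 'a::finite) pmf"
    and \<sigma>2 :: real
    and \<F> :: "('a \<Rightarrow> real) set"
    and c :: "('a \<Rightarrow> real) \<Rightarrow> real"
    and t :: real
  assumes lsi: "d_LSI \<mu> \<sigma>2"
    and F_ne: "\<F> \<noteq> {}"
    and c_nonneg: "\<And>f. f \<in> \<F> \<Longrightarrow> c f \<ge> 0"
    and c_osc: "\<And>f x y. f \<in> \<F> \<Longrightarrow> \<bar>f x - f y\<bar> \<le> c f"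
    and c_bdd: "bdd_above (c ` \<F>)"
    and g_fin: "\<And>x :: 'n \<Rightarrow> 'a. bdd_above ((\<lambda>f. \<bar>\<Sum>j\<in>UNIV. f (x j)\<bar>) ` \<F>)"
    and t_nonneg: "t \<ge> 0"
  shows "let g = (\<lambda>x. SUP f\<in>\<F>. \<bar>\<Sum>j\<in>UNIV. f (x j)\<bar>) in
         measure_pmf.prob \<mu> {x. g x \<ge> measure_pmf.expectation \<mu> g + t}
           \<le> 2 * exp (- t\<^sup>2 / (15 * \<sigma>2 * real CARD('n) * (SUP f\<in>\<F>. c f)\<^sup>2))"
proof -
  define g where "g = (\<lambda>x :: 'n \<Rightarrow> 'a. SUP f\<in>\<F>. \<bar>\<Sum>j\<in>UNIV. f (x j)\<bar>)"
  define C where "C = (SUP f\<in>\<F>. c f)"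
  define n where "n = real CARD('n)"
  define m where "m = measure_pmf.expectation \<mu> g"
  define P where "P = measure_pmf.prob \<mu> {x. g x \<ge> m + t}"
  have P1: "P \<le> 1" unfolding P_def by simp
  have n1: "n \<ge> 1" by (simp add: n_def)
  have cC: "f \<in> \<F> \<Longrightarrow> c f \<le> C" for f unfolding C_def by (rule cSUP_upper[OF _ c_bdd])
  have C0: "C \<ge> 0" using F_ne cC c_nonneg by (meson ex_in_conv order.trans)
  have goal: "P \<le> 2 * exp (- t\<^sup>2 / (15 * \<sigma>2 * n * C\<^sup>2))"
  proof (cases "\<sigma>2 > 0 \<and> C > 0 \<and> t > 0")
    case False
    hence "15 * \<sigma>2 * n * C\<^sup>2 \<le> 0 \<or> t = 0" using C0 n1 t_nonneg
      by (auto simp: mult_nonpos_nonneg not_less)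
    hence "- t\<^sup>2 / (15 * \<sigma>2 * n * C\<^sup>2) \<ge> 0"
    proof
      assume "15 * \<sigma>2 * n * C\<^sup>2 \<le> 0"
      moreover have "- t\<^sup>2 \<le> 0" by simp
      ultimately show ?thesis using divide_nonpos_nonpos by blast
    qed simp
    hence "1 \<le> exp (- t\<^sup>2 / (15 * \<sigma>2 * n * C\<^sup>2))" by simp
    thus ?thesis using P1 by linarith
  next
    case True
    hence s0: "\<sigma>2 > 0" and Cp: "C > 0" and tp: "t > 0" by auto
    have osc1: "g y \<le> g x + C" if "y \<in> others_eq i x" for x y i
      unfolding g_def
    proof (rule cSUP_least[OF F_ne])
      fix f assume f: "f \<in> \<F>"
      have "\<bar>\<Sum>j\<in>UNIV. f (y j)\<bar> \<le> \<bar>\<Sum>j\<in>UNIV. f (x j)\<bar> + \<bar>f (y i) - f (x i)\<bar>"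
        using sum_diff_one[OF that, of f] by linarith
      also have "\<dots> \<le> (SUP f\<in>\<F>. \<bar>\<Sum>j\<in>UNIV. f (x j)\<bar>) + C"
        using cSUP_upper[OF f g_fin[of x]] c_osc[OF f, of "y i" "x i"] cC[OF f] by linarith
      finally show "\<bar>\<Sum>j\<in>UNIV. f (y j)\<bar> \<le> (SUP f\<in>\<F>. \<bar>\<Sum>j\<in>UNIV. f (x j)\<bar>) + C" .
    qed
    have osc: "\<bar>g y - g x\<bar> \<le> C" if "y \<in> others_eq i x" for x y i
    proof -
      have "x \<in> others_eq i y" using that by (auto simp: others_eq_def)
      thus ?thesis using osc1[OF that] osc1[of x i y] by linarith
    qed
    define p where "p = pmf \<mu>"
    have p1: "(\<Sum>x\<in>UNIV. p x) = 1" unfolding p_def by (rule sum_pmf_eq_1) auto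
    have p0: "p x \<ge> 0" for x by (simp add: p_def)
    have m_eq: "m = (\<Sum>x\<in>UNIV. p x * g x)" unfolding m_def p_def
      by (subst integral_measure_pmf_real[of UNIV]) (auto simp: mult.commute)
    define Z where "Z l = (\<Sum>x\<in>UNIV. p x * exp (l * g x))" for l
    define Z' where "Z' l = (\<Sum>x\<in>UNIV. p x * (g x * exp (l * g x)))" for l
    define K where "K = 2 * \<sigma>2 * n * C\<^sup>2"
    have Kp: "K > 0" using s0 Cp n1 by (simp add: K_def)
    have Zpos: "Z l > 0" for l
    proof -
      obtain x where "p x > 0" using p1 p0
        by (metis (no_types, lifting) less_eq_real_def sum.neutral zero_neq_one)
      hence "0 < p x * exp (l * g x)" by simp
      also have "\<dots> \<le> Z l" unfolding Z_def
        by (rule member_le_sum) (auto simp: p0)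
      finally show ?thesis .
    qed
    have Z0: "Z 0 = 1" using p1 by (simp add: Z_def)
    have der: "(Z has_real_derivative Z' l) (at l)" for l
      unfolding Z_def Z'_def
      by (auto intro!: derivative_eq_intros simp: algebra_simps)
    have Z'0: "Z' 0 = m" by (simp add: Z'_def m_eq)
    have ineq: "l * Z' l - Z l * ln (Z l) \<le> K * l\<^sup>2 * Z l" if lp: "l > 0" for l
    proof -
      define F where "F x = exp (l * g x / 2)" for x
      have F2: "(F x)\<^sup>2 = exp (l * g x)" for x
        by (simp add: F_def power2_eq_square flip: exp_add)
      have E1: "Ent \<mu> (\<lambda>x. (F x)\<^sup>2) = l * Z' l - Z l * ln (Z l)"
      proof -
        have a: "measure_pmf.expectation \<mu> (\<lambda>x. xlogx ((F x)\<^sup>2)) = l * Z' l"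
          unfolding F2 Z'_def
          by (subst integral_measure_pmf_real[of UNIV])
             (auto simp: xlogx_def p_def sum_distrib_left algebra_simps intro!: sum.cong)
        have b: "measure_pmf.expectation \<mu> (\<lambda>x. (F x)\<^sup>2) = Z l"
          unfolding F2 Z_def
          by (subst integral_measure_pmf_real[of UNIV]) (auto simp: p_def mult.commute)
        show ?thesis using Zpos[of l] unfolding Ent_def a b by (simp add: xlogx_def)
      qed
      also have "\<dots> \<le> 2 * \<sigma>2 * measure_pmf.expectation \<mu> (dgrad_sq \<mu> F)"
        using lsi E1 unfolding d_LSI_def by metis
      also have "measure_pmf.expectation \<mu> (dgrad_sq \<mu> F) = (\<Sum>x\<in>UNIV. p x * dgrad_sq \<mu> F x)"
        by (subst integral_measure_pmf_real[of UNIV]) (auto simp: p_def mult.commute)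
      also have "\<dots> \<le> (\<Sum>x\<in>UNIV. p x * (\<Sum>i\<in>UNIV. (l*C)\<^sup>2 *
            (\<Sum>y\<in>UNIV. pmf (cond_pmf \<mu> (others_eq i x)) y * exp (l * g y))))"
      proof (rule sum_mono)
        fix x
        show "p x * dgrad_sq \<mu> F x \<le> p x * (\<Sum>i\<in>UNIV. (l*C)\<^sup>2 *
            (\<Sum>y\<in>UNIV. pmf (cond_pmf \<mu> (others_eq i x)) y * exp (l * g y)))"
        proof (cases "p x = 0")
          case False
          hence x: "x \<in> set_pmf \<mu>" by (simp add: p_def set_pmf_eq)
          have "dgrad_sq \<mu> F x \<le> (\<Sum>i\<in>UNIV. (l*C)\<^sup>2 *
            (\<Sum>y\<in>UNIV. pmf (cond_pmf \<mu> (others_eq i x)) y * exp (l * g y)))"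
            unfolding dgrad_sq_def F_def
            by (intro sum_mono dsq_bound[OF x] osc) (use lp in auto)
          thus ?thesis by (intro mult_left_mono p0)
        qed simp
      qed
      also have "\<dots> = (\<Sum>i\<in>UNIV. (l*C)\<^sup>2 * (\<Sum>x\<in>UNIV. p x *
            (\<Sum>y\<in>UNIV. pmf (cond_pmf \<mu> (others_eq i x)) y * exp (l * g y))))"
      proof -
        have "(\<Sum>x\<in>UNIV. p x * (\<Sum>i\<in>UNIV. (l*C)\<^sup>2 *
            (\<Sum>y\<in>UNIV. pmf (cond_pmf \<mu> (others_eq i x)) y * exp (l * g y))))
          = (\<Sum>x\<in>UNIV. \<Sum>i\<in>UNIV. (l*C)\<^sup>2 * (p x *
            (\<Sum>y\<in>UNIV. pmf (cond_pmf \<mu> (others_eq i x)) y * exp (l * g y))))"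
          by (simp only: sum_distrib_left mult.left_commute)
        also have "\<dots> = (\<Sum>i\<in>UNIV. \<Sum>x\<in>UNIV. (l*C)\<^sup>2 * (p x *
            (\<Sum>y\<in>UNIV. pmf (cond_pmf \<mu> (others_eq i x)) y * exp (l * g y))))"
          by (rule sum.swap)
        finally show ?thesis by (simp only: sum_distrib_left)
      qed
      also have "\<dots> = (\<Sum>i\<in>(UNIV::'n set). (l*C)\<^sup>2 * Z l)"
        unfolding Z_def p_def
        by (intro sum.cong refl arg_cong2[where f="(*)"] tower others_eq_refl others_eq_eq) auto
      also have "\<dots> = n * (l*C)\<^sup>2 * Z l" by (simp add: n_def)
      finally show ?thesis using s0 E1 by (simp add: K_def power2_eq_square mult_left_mono algebra_simps)
    qed
    define l where "l = t / (2 * K)"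
    have lp: "l > 0" using tp Kp by (simp add: l_def)
    have H: "ln (Z l) \<le> l * m + K * l\<^sup>2"
      by (rule herbst[OF Zpos Z0 der Z'0 ineq lp])
    have "P = (\<Sum>x\<in>{x. g x \<ge> m + t}. p x)"
      unfolding P_def p_def by (rule measure_measure_pmf_finite) simp
    also have "\<dots> \<le> (\<Sum>x\<in>{x. g x \<ge> m + t}. p x * exp (l * (g x - (m + t))))"
    proof (rule sum_mono)
      fix x assume "x \<in> {x. g x \<ge> m + t}"
      hence "1 \<le> exp (l * (g x - (m + t)))" using lp by simp
      thus "p x \<le> p x * exp (l * (g x - (m + t)))" using p0[of x]
        by (metis mult.right_neutral mult_left_mono)
    qed
    also have "\<dots> \<le> (\<Sum>x\<in>UNIV. p x * exp (l * (g x - (m + t))))"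
      by (rule sum_mono2) (auto simp: p0)
    also have "\<dots> = Z l * exp (- (l * (m + t)))"
      unfolding Z_def sum_distrib_right
      by (intro sum.cong refl) (simp add: algebra_simps flip: exp_add)
    also have "\<dots> = exp (ln (Z l) - l * (m + t))"
      using Zpos[of l] by (simp add: exp_diff exp_minus field_simps exp_add)
    also have "\<dots> \<le> exp (K * l\<^sup>2 - l * t)"
      using H by (simp add: algebra_simps)
    also have "K * l\<^sup>2 - l * t = - t\<^sup>2 / (8 * \<sigma>2 * n * C\<^sup>2)"
      using Kp unfolding l_def K_def by (simp add: field_simps power2_eq_square)
    also have "exp (- t\<^sup>2 / (8 * \<sigma>2 * n * C\<^sup>2)) \<le> exp (- t\<^sup>2 / (15 * \<sigma>2 * n * C\<^sup>2))"
    proof -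
      have d: "0 < \<sigma>2 * n * C\<^sup>2" using s0 Cp n1 by simp
      have "t\<^sup>2 / (15 * (\<sigma>2 * n * C\<^sup>2)) \<le> t\<^sup>2 / (8 * (\<sigma>2 * n * C\<^sup>2))"
      proof -
        have gen: "t\<^sup>2 / (15 * D) \<le> t\<^sup>2 / (8 * D)" if "D > 0" for D :: real
          using that by (intro divide_left_mono) (auto simp: zero_less_mult_iff)
        show ?thesis by (rule gen[OF d])
      qed
      thus ?thesis by (simp add: mult.assoc)
    qed
    finally have "P \<le> exp (- t\<^sup>2 / (15 * \<sigma>2 * n * C\<^sup>2))" .
    moreover have "0 \<le> exp (- t\<^sup>2 / (15 * \<sigma>2 * n * C\<^sup>2))" by simp
    ultimately show ?thesis by linarith
  qed
  thus ?thesis unfolding Let_def g_def[symmetric] C_def[symmetric] n_def[symmetric]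
    m_def[symmetric] P_def[symmetric] .
qed

thm_deps proposition1p4

end
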